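(* Let $r=r(n)\ge 2$ with $r=o(n^{1/2})$. Then $\Pr(\mathcal C\mid\mathcal A_2)=o(1)$ as $n\to\infty$, where $\mathcal C$ is the event that a third edge $e_3$ is chosen, $e_3\supseteq e_1\cap e_2$, and $e_3$ contains at least one vertex of $(e_1\setminus e_2)\cup(e_2\setminus e_1)$.
   Context: Random intersecting process: Let $[n]=\{1,\dots,n\}$ and $\binom{[n]}{r}$ the family of $r$-subsets of $[n]$. Choose $e_1$ uniformly at random from $\binom{[n]}{r}$. Given $\mathcal F_i=\{e_1,\dots,e_i\}$, let $\mathcal A(\mathcal F_i)=\{e\in\binom{[n]}{r}: e\notin\mathcal F_i,\ e\cap e_j\neq\emptyset \text{ for all } 1\le j\le i\}$, and choose $e_{i+1}$ uniformly at random from $\mathcal A(\mathcal F_i)$. The process halts when $\mathcal A(\mathcal F_i)=\emptyset$. $\mathcal A_2$ is the event that at least two edges are chosen and $|e_1\cap e_2|=1$. *)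

theory Defs
  imports "HOL-Probability.Probability" "HOL-Library.Landau_Symbols"
begin

definition edges :: "nat \<Rightarrow> nat \<Rightarrow> nat set set" where
  "edges n r = {e. e \<subseteq> {1..n} \<and> card e = r}"

definition adm :: "nat \<Rightarrow> nat \<Rightarrow> nat set set \<Rightarrow> nat set set" where
  "adm n r F = {e \<in> edges n r. e \<notin> F \<and> (\<forall>f\<in>F. e \<inter> f \<noteq> {})}"

text \<open>For the empty list, adm is the whole of edges n r.\<close>
definition proc_step :: "nat \<Rightarrow> nat \<Rightarrow> nat set list \<Rightarrow> nat set list pmf" where
  "proc_step n r xs =
     (if adm n r (set xs) = {} then return_pmf xs
      else map_pmf (\<lambda>e. xs @ [e]) (pmf_of_set (adm n r (set xs))))"

fun proc :: "nat \<Rightarrow> nat \<Rightarrow> nat \<Rightarrow> nat set list pmf" where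
  "proc n r 0 = return_pmf []"
| "proc n r (Suc k) = bind_pmf (proc n r k) (proc_step n r)"

definition evA2 :: "nat set list \<Rightarrow> bool" where
  "evA2 xs \<longleftrightarrow> length xs \<ge> 2 \<and> card (xs!0 \<inter> xs!1) = 1"

definition evC :: "nat set list \<Rightarrow> bool" where
  "evC xs \<longleftrightarrow> length xs \<ge> 3 \<and> xs!0 \<inter> xs!1 \<subseteq> xs!2 \<and>
     xs!2 \<inter> ((xs!0 - xs!1) \<union> (xs!1 - xs!0)) \<noteq> {}"

text \<open>Pr(C | A_2), computed on the first three steps of the process
  (both events depend only on e_1, e_2, e_3).\<close>
definition probC_given_A2 :: "nat \<Rightarrow> nat \<Rightarrow> real" where
  "probC_given_A2 n r =
     measure_pmf.prob (proc n r 3) {xs. evC xs \<and> evA2 xs} /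
     measure_pmf.prob (proc n r 3) {xs. evA2 xs}"

end

theory Submission
  imports Defs
begin


lemma count_sup:
  assumes "finite U" "K \<subseteq> U" "card K \<le> k"
  shows "card {e. e \<subseteq> U \<and> card e = k \<and> K \<subseteq> e} = (card U - card K) choose (k - card K)"
proof -
  have fK: "finite K" using assms finite_subset by blast
  have eq: "{e. e \<subseteq> U \<and> card e = k \<and> K \<subseteq> e} = (\<lambda>B. B \<union> K) ` {B. B \<subseteq> U - K \<and> card B = k - card K}"
  proof
    show "{e. e \<subseteq> U \<and> card e = k \<and> K \<subseteq> e} \<subseteq> (\<lambda>B. B \<union> K) ` {B. B \<subseteq> U - K \<and> card B = k - card K}"
    proof
      fix e assume e: "e \<in> {e. e \<subseteq> U \<and> card e = k \<and> K \<subseteq> e}"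
      hence "finite e" using assms finite_subset by blast
      hence "card (e - K) = k - card K" using e fK by (simp add: card_Diff_subset)
      moreover have "e = (e - K) \<union> K" using e by blast
      ultimately show "e \<in> (\<lambda>B. B \<union> K) ` {B. B \<subseteq> U - K \<and> card B = k - card K}" using e by blast
    qed
  next
    show "(\<lambda>B. B \<union> K) ` {B. B \<subseteq> U - K \<and> card B = k - card K} \<subseteq> {e. e \<subseteq> U \<and> card e = k \<and> K \<subseteq> e}"
    proof
      fix e assume "e \<in> (\<lambda>B. B \<union> K) ` {B. B \<subseteq> U - K \<and> card B = k - card K}"
      then obtain B where B: "B \<subseteq> U - K" "card B = k - card K" "e = B \<union> K" by blast
      have "finite B" using B assms finite_subset by blast
      hence "card e = k" using B fK assms by (subst B(3), subst card_Un_disjoint) auto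
      thus "e \<in> {e. e \<subseteq> U \<and> card e = k \<and> K \<subseteq> e}" using B assms by auto
    qed
  qed
  have inj: "inj_on (\<lambda>B. B \<union> K) {B. B \<subseteq> U - K \<and> card B = k - card K}"
    by (rule inj_onI) blast
  have "card {e. e \<subseteq> U \<and> card e = k \<and> K \<subseteq> e} = card {B. B \<subseteq> U - K \<and> card B = k - card K}"
    by (subst eq, rule card_image[OF inj])
  also have "\<dots> = card (U - K) choose (k - card K)"
    using assms by (intro n_subsets) auto
  also have "card (U - K) = card U - card K" using fK assms by (simp add: card_Diff_subset)
  finally show ?thesis .
qed

lemma edges_sup:
  assumes "K \<subseteq> {1..n}" "card K \<le> r"
  shows "card {e \<in> edges n r. K \<subseteq> e} = (n - card K) choose (r - card K)"
proof -
  have "{e \<in> edges n r. K \<subseteq> e} = {e. e \<subseteq> {1..n} \<and> card e = r \<and> K \<subseteq> e}"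
    unfolding edges_def by blast
  thus ?thesis using count_sup[of "{1..n}" K r] assms by simp
qed

lemma finite_edges: "finite (edges n r)"
  unfolding edges_def by (rule finite_subset[of _ "Pow {1..n}"]) auto

lemma l1: fixes a b m s :: real assumes "a * s \<le> m * b" "b > 0" "s > 0" shows "a / b \<le> m / s"
  using assms by (simp add: field_simps)
lemma l2: fixes r c s n :: real assumes "(n - 1) * c = s * (r - 1)" "s > 0" "n - 1 > 0"
  shows "2*(r - 1) * c / s = 2*(r - 1)^2 / (n - 1)"
proof -
  have c: "c = s * (r - 1) / (n - 1)" using assms by (simp add: field_simps)
  show ?thesis unfolding c using assms by (simp add: field_simps power2_eq_square)
qed
lemma l3: fixes a m s b :: real assumes ha: "a \<le> m - 2" and hb: "s \<le> b + 2" and hm: "m \<le> s" and m2: "2 \<le> m" and sp: "s > 0"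
  shows "a * s \<le> m * b"
proof -
    have "a * s \<le> (m - 2) * s" using ha sp by (intro mult_right_mono) auto
    also have "\<dots> \<le> m * (s - 2)" using hm by (simp add: algebra_simps)
    also have "\<dots> \<le> m * b" using hb m2 by (intro mult_left_mono) auto
    finally show ?thesis .
qed


lemma cond_bound:
  assumes e1: "e1 \<in> edges n r" and e2: "e2 \<in> edges n r" and i: "card (e1 \<inter> e2) = 1"
    and r2: "r \<ge> 2" and ne: "adm n r {e1,e2} \<noteq> {}"
  shows "real (card (adm n r {e1,e2} \<inter> {e. evC [e1,e2,e]})) / real (card (adm n r {e1,e2}))
          \<le> 2*(real r - 1)^2 / real (n-1)"
proof -
  obtain v where v: "e1 \<inter> e2 = {v}" using i by (metis card_1_singletonE)
  have e1s: "e1 \<subseteq> {1..n}" "card e1 = r" using e1 by (auto simp: edges_def)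
  have e2s: "e2 \<subseteq> {1..n}" "card e2 = r" using e2 by (auto simp: edges_def)
  have fe1: "finite e1" "finite e2" using e1s e2s finite_subset by blast+
  have vn: "v \<in> {1..n}" using v e1s by blast
  have nr: "r \<le> n" using card_mono[OF _ e1s(1)] e1s by simp
  define D where "D = (e1 - e2) \<union> (e2 - e1)"
  have c12: "card (e1 - e2) = r - 1" "card (e2 - e1) = r - 1"
    using card_Diff_subset_Int[of e1 e2] card_Diff_subset_Int[of e2 e1] fe1 e1s e2s i
    by (auto simp: Int_commute)
  have fD: "finite D" using fe1 D_def by auto
  have cD: "card D \<le> 2*(r-1)" unfolding D_def using card_Un_le[of "e1-e2" "e2-e1"] c12 by simp
  have Dn: "D \<subseteq> {1..n}" using e1s e2s D_def by auto
  have vD: "v \<notin> D" using v D_def by auto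
  have evC_iff: "evC [e1,e2,e] \<longleftrightarrow> v \<in> e \<and> e \<inter> D \<noteq> {}" for e
    unfolding evC_def D_def using v by auto
  define A where "A = adm n r {e1,e2}"
  define Sv where "Sv = {e \<in> edges n r. {v} \<subseteq> e}"
  define M where "M = {e \<in> Sv. e \<inter> D \<noteq> {}}"
  define c where "c = (n-2) choose (r-2)"
  define s where "s = card Sv"
  have fA: "finite A" unfolding A_def adm_def using finite_edges by auto
  have fS: "finite Sv" unfolding Sv_def using finite_edges by auto
  have s_eq: "s = (n-1) choose (r-1)" unfolding s_def Sv_def
    using edges_sup[of "{v}" n r] vn r2 by simp
  have Pu: "card {e \<in> edges n r. {v,u} \<subseteq> e} = c" if "u \<in> D" for u
  proof -
    have "u \<noteq> v" "u \<in> {1..n}" using that vD Dn by auto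
    hence "card {v,u} = 2" by simp
    thus ?thesis using edges_sup[of "{v,u}" n r] vn r2 \<open>u \<in> {1..n}\<close> unfolding c_def by simp
  qed
  have "M \<subseteq> (\<Union>u\<in>D. {e \<in> edges n r. {v,u} \<subseteq> e})" unfolding M_def Sv_def by blast
  hence "card M \<le> card (\<Union>u\<in>D. {e \<in> edges n r. {v,u} \<subseteq> e})"
    using finite_edges fD by (intro card_mono) auto
  also have "\<dots> \<le> (\<Sum>u\<in>D. card {e \<in> edges n r. {v,u} \<subseteq> e})" using fD by (rule card_UN_le)
  also have "\<dots> = card D * c" using Pu by simp
  finally have mD: "card M \<le> card D * c" .
  have e1M: "e1 \<in> M" "e2 \<in> M"
  proof -
    have "card (e1-e2) \<noteq> 0" "card (e2-e1) \<noteq> 0" using c12 r2 by simp_all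
    hence "e1 - e2 \<noteq> {}" "e2 - e1 \<noteq> {}" by (metis card.empty)+
    thus "e1 \<in> M" "e2 \<in> M" unfolding M_def Sv_def D_def using e1 e2 v by auto
  qed
  have e12: "e1 \<noteq> e2" using i e1s r2 by auto
  have fM: "finite M" using fS M_def by auto
  have "A \<inter> {e. evC [e1,e2,e]} \<subseteq> M - {e1,e2}"
    unfolding A_def adm_def M_def Sv_def using evC_iff by auto
  hence "card (A \<inter> {e. evC [e1,e2,e]}) \<le> card (M - {e1,e2})" using fM by (intro card_mono) auto
  also have "\<dots> = card M - 2" using e1M e12 fM by (simp add: card_Diff_subset)
  finally have a1: "card (A \<inter> {e. evC [e1,e2,e]}) \<le> card M - 2" .
  have "card {e1,e2} \<le> card M" using e1M fM by (intro card_mono) auto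
  hence m2: "2 \<le> card M" using e12 by simp
  have MS: "card M \<le> s" unfolding s_def M_def using fS by (intro card_mono) auto
  have "Sv - {e1,e2} \<subseteq> A" unfolding A_def adm_def Sv_def using v by auto
  hence "card (Sv - {e1,e2}) \<le> card A" using fA by (intro card_mono) auto
  moreover have "card (Sv - {e1,e2}) = s - 2" using e1M e12 fS unfolding s_def
    by (subst card_Diff_subset) (auto simp: M_def)
  ultimately have sA: "s \<le> card A + 2" by simp
  have s0: "s > 0" using e1M fS unfolding s_def M_def by (auto simp: card_gt_0_iff)
  have bin: "(n-1) * c = s * (r-1)"
  proof -
    have "Suc (n-2) * ((n-2) choose (r-2)) = (Suc (n-2) choose Suc (r-2)) * Suc (r-2)"
      by (rule Suc_times_binomial_eq)
    moreover have "Suc (n-2) = n-1" "Suc (r-2) = r-1" using nr r2 by auto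
    ultimately show ?thesis unfolding c_def s_eq by simp
  qed
  have bpos: "card A > 0" using ne fA unfolding A_def by (auto simp: card_gt_0_iff)
  define a where "a = real (card (A \<inter> {e. evC [e1,e2,e]}))"
  define b where "b = real (card A)"
  define m where "m = real (card M)"
  have ha: "a \<le> m - 2" using a1 m2 unfolding a_def m_def by linarith
  have hb: "real s \<le> b + 2" using sA unfolding b_def by linarith
  have hm: "m \<le> real s" using MS unfolding m_def by simp
  have hD: "m \<le> 2*(real r - 1) * real c" using mD cD r2 unfolding m_def
  proof -
    have "real (card M) \<le> real (card D * c)" using mD by linarith
    also have "\<dots> \<le> real (2*(r-1)*c)" using cD by (intro of_nat_mono mult_right_mono) auto
    also have "\<dots> = 2*(real r - 1) * real c" using r2 by (simp add: of_nat_diff)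
    finally show "real (card M) \<le> 2*(real r - 1) * real c" .
  qed
  have hbin: "(real n - 1) * real c = real s * (real r - 1)"
    using arg_cong[OF bin, of real] nr r2 by (simp add: of_nat_diff)
  have bp: "b > 0" using bpos unfolding b_def by simp
  have sp: "real s > 0" using s0 by simp
  have n1: "real n - 1 > 0" using nr r2 by simp
  have "a / b \<le> m / real s" using l1[OF l3[OF ha hb hm _ sp] bp sp] m2 unfolding m_def by simp
  also have "\<dots> \<le> 2*(real r - 1) * real c / real s" using hD sp by (simp add: divide_right_mono)
  also have "\<dots> = 2*(real r - 1)^2 / (real n - 1)" by (rule l2[OF hbin sp n1])
  also have "real n - 1 = real (n-1)" using nr r2 by (simp add: of_nat_diff)
  finally show ?thesis unfolding a_def b_def A_def .
qed



lemma finite_adm: "finite (adm n r F)"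
  unfolding adm_def using finite_edges by auto

lemma step_set:
  assumes "ys \<in> set_pmf (proc_step n r xs)"
  shows "ys = xs \<or> (\<exists>e\<in>adm n r (set xs). ys = xs @ [e])"
  using assms finite_adm[of n r "set xs"] unfolding proc_step_def
  by (auto split: if_splits)

lemma proc_set:
  "xs \<in> set_pmf (proc n r k) \<Longrightarrow> length xs \<le> k \<and> set xs \<subseteq> edges n r"
proof (induction k arbitrary: xs)
  case 0 thus ?case by simp
next
  case (Suc k)
  then obtain zs where zs: "zs \<in> set_pmf (proc n r k)" "xs \<in> set_pmf (proc_step n r zs)" by auto
  from step_set[OF zs(2)] Suc.IH[OF zs(1)] show ?case by (auto simp: adm_def)
qed

definition eps :: "nat \<Rightarrow> nat \<Rightarrow> real" where
  "eps n r = 2*(real r - 1)^2 / real (n-1)"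

lemma eps_nonneg: "eps n r \<ge> 0" unfolding eps_def by simp

lemma pointwise:
  assumes xs: "xs \<in> set_pmf (proc n r 2)" and r2: "r \<ge> 2"
  shows "measure_pmf.prob (proc_step n r xs) {ys. evC ys \<and> evA2 ys}
         \<le> eps n r * measure_pmf.prob (proc_step n r xs) {ys. evA2 ys}"
proof -
  have lx: "length xs \<le> 2" "set xs \<subseteq> edges n r" using proc_set[OF xs] by auto
  show ?thesis
  proof (cases "length xs = 2 \<and> evA2 xs")
    case False
    have "set_pmf (proc_step n r xs) \<inter> {ys. evC ys \<and> evA2 ys} = {}"
    proof (intro equals0I)
      fix ys assume ys: "ys \<in> set_pmf (proc_step n r xs) \<inter> {ys. evC ys \<and> evA2 ys}"
      hence "length ys \<ge> 3" "evA2 ys" by (auto simp: evC_def)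
      with step_set[of ys n r xs] ys lx False show False
        by (auto simp: evA2_def nth_append)
    qed
    hence "measure_pmf.prob (proc_step n r xs) {ys. evC ys \<and> evA2 ys} = 0"
      by (simp add: measure_pmf_zero_iff)
    thus ?thesis using eps_nonneg by simp
  next
    case True
    then obtain e1 e2 where xe: "xs = [e1, e2]"
      by (cases xs; cases "tl xs"; auto)
    have e12: "e1 \<in> edges n r" "e2 \<in> edges n r" using lx xe by auto
    have i: "card (e1 \<inter> e2) = 1" using True xe by (simp add: evA2_def)
    have one: "measure_pmf.prob (proc_step n r xs) {ys. evA2 ys} = 1"
    proof -
      have "\<forall>ys\<in>set_pmf (proc_step n r xs). evA2 ys"
        using step_set[of _ n r xs] True xe by (fastforce simp: evA2_def nth_append)
      thus ?thesis by (subst measure_pmf.prob_eq_1) (auto simp: AE_measure_pmf_iff)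
    qed
    show ?thesis
    proof (cases "adm n r {e1,e2} = {}")
      case True
      hence "proc_step n r xs = return_pmf xs" using xe by (simp add: proc_step_def)
      hence "measure_pmf.prob (proc_step n r xs) {ys. evC ys \<and> evA2 ys} = 0"
        using xe by (simp add: evC_def)
      thus ?thesis using eps_nonneg one by simp
    next
      case False
      have st: "proc_step n r xs = map_pmf (\<lambda>e. xs @ [e]) (pmf_of_set (adm n r {e1,e2}))"
        using False xe by (simp add: proc_step_def)
      have "measure_pmf.prob (proc_step n r xs) {ys. evC ys \<and> evA2 ys}
          = measure_pmf.prob (pmf_of_set (adm n r {e1,e2})) {e. evC [e1,e2,e]}"
        unfolding st using True xe by (simp add: vimage_def evA2_def)
      also have "\<dots> = real (card (adm n r {e1,e2} \<inter> {e. evC [e1,e2,e]})) / real (card (adm n r {e1,e2}))"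
        using False finite_adm by (simp add: measure_pmf_of_set)
      also have "\<dots> \<le> eps n r" unfolding eps_def using cond_bound[OF e12 i r2 False] .
      finally show ?thesis using one by simp
    qed
  qed
qed


lemma probC_bound:
  assumes r2: "r \<ge> 2"
  shows "0 \<le> probC_given_A2 n r \<and> probC_given_A2 n r \<le> eps n r"
proof -
  define p2 where "p2 = proc n r 2"
  have p3: "proc n r 3 = bind_pmf p2 (proc_step n r)"
    unfolding p2_def by (simp add: eval_nat_numeral)
  define PC where "PC = measure_pmf.prob (proc n r 3) {xs. evC xs \<and> evA2 xs}"
  define PA where "PA = measure_pmf.prob (proc n r 3) {xs. evA2 xs}"
  have "ennreal PC = (\<integral>\<^sup>+x. emeasure (measure_pmf (proc_step n r x)) {xs. evC xs \<and> evA2 xs} \<partial>p2)"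
    unfolding PC_def by (simp add: p3 measure_pmf.emeasure_eq_measure[symmetric])
  also have "\<dots> \<le> (\<integral>\<^sup>+x. ennreal (eps n r) * emeasure (measure_pmf (proc_step n r x)) {xs. evA2 xs} \<partial>p2)"
  proof (rule nn_integral_mono_AE, rule AE_pmfI)
    fix x assume x: "x \<in> set_pmf p2"
    have "emeasure (measure_pmf (proc_step n r x)) {xs. evC xs \<and> evA2 xs}
        = ennreal (measure_pmf.prob (proc_step n r x) {xs. evC xs \<and> evA2 xs})"
      by (simp add: measure_pmf.emeasure_eq_measure)
    also have "\<dots> \<le> ennreal (eps n r * measure_pmf.prob (proc_step n r x) {xs. evA2 xs})"
      using pointwise[OF x[unfolded p2_def] r2] by (rule ennreal_leI)
    also have "\<dots> = ennreal (eps n r) * emeasure (measure_pmf (proc_step n r x)) {xs. evA2 xs}"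
      using eps_nonneg by (simp add: ennreal_mult measure_pmf.emeasure_eq_measure)
    finally show "emeasure (measure_pmf (proc_step n r x)) {xs. evC xs \<and> evA2 xs}
        \<le> ennreal (eps n r) * emeasure (measure_pmf (proc_step n r x)) {xs. evA2 xs}" .
  qed
  also have "\<dots> = ennreal (eps n r) * (\<integral>\<^sup>+x. emeasure (measure_pmf (proc_step n r x)) {xs. evA2 xs} \<partial>p2)"
    by (rule nn_integral_cmult) simp
  also have "\<dots> = ennreal (eps n r) * emeasure (measure_pmf (proc n r 3)) {xs. evA2 xs}"
    by (simp add: p3)
  also have "\<dots> = ennreal (eps n r * PA)"
    unfolding PA_def using eps_nonneg
    by (simp add: measure_pmf.emeasure_eq_measure ennreal_mult)
  finally have le0: "ennreal PC \<le> ennreal (eps n r * PA)" .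
  have PA0: "PA \<ge> 0" unfolding PA_def by simp
  have "eps n r * PA \<ge> 0" using PA0 eps_nonneg by simp
  hence le: "PC \<le> eps n r * PA" using le0 ennreal_le_iff by blast
  have "probC_given_A2 n r = PC / PA" unfolding probC_given_A2_def PC_def PA_def ..
  moreover have "PC \<ge> 0" "PA \<ge> 0" unfolding PC_def PA_def by simp_all
  ultimately show ?thesis using le eps_nonneg
    by (cases "PA = 0") (auto simp: divide_le_eq)
qed

lemma eps_le:
  fixes n r :: nat assumes "n \<ge> 2" "r \<ge> 2"
  shows "eps n r \<le> 4 * (real r / sqrt (real n))^2"
proof -
  have n: "real n \<ge> 2" using assms by simp
  have e: "(real r / sqrt (real n))^2 = (real r)^2 / real n" using n by (simp add: power_divide)
  have rn: "real (n-1) = real n - 1" using assms by (simp add: of_nat_diff)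
  have "(real r - 1)^2 \<le> (real r)^2" using assms by (simp add: power_mono)
  hence "2*(real r - 1)^2 * real n \<le> 2*(real r)^2 * real n" using n by simp
  also have "\<dots> \<le> 4*(real r)^2 * (real n - 1)"
  proof -
    have "2*(real r)^2 \<le> real n * (real r)^2" using n by (intro mult_right_mono) auto
    thus ?thesis by (simp add: algebra_simps)
  qed
  finally have "2*(real r - 1)^2 * real n \<le> 4*(real r)^2 * (real n - 1)" .
  thus ?thesis unfolding eps_def e rn using n by (simp add: field_simps)
qed

theorem lemma4:
  fixes r :: "nat \<Rightarrow> nat"
  assumes "\<forall>n. r n \<ge> 2"
    and "(\<lambda>n. real (r n)) \<in> o(\<lambda>n. sqrt (real n))"
  shows "(\<lambda>n. probC_given_A2 n (r n)) \<longlonglongrightarrow> 0"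
proof -
  have t: "(\<lambda>n. real (r n) / sqrt (real n)) \<longlonglongrightarrow> 0"
    using smalloD_tendsto[OF assms(2)] .
  have g: "(\<lambda>n. 4 * (real (r n) / sqrt (real n))^2) \<longlonglongrightarrow> 0"
  proof -
    have "(\<lambda>n. (real (r n) / sqrt (real n))^2) \<longlonglongrightarrow> 0"
      using tendsto_power[OF t, of 2] by simp
    thus ?thesis by (rule tendsto_mult_right_zero)
  qed
  show ?thesis
  proof (rule tendsto_sandwich[OF _ _ tendsto_const g])
    show "\<forall>\<^sub>F n in sequentially. 0 \<le> probC_given_A2 n (r n)"
      using probC_bound assms(1) by simp
    show "\<forall>\<^sub>F n in sequentially. probC_given_A2 n (r n) \<le> 4 * (real (r n) / sqrt (real n))^2"
      using eventually_ge_at_top[of 2]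
    proof (rule eventually_mono)
      fix n :: nat assume "n \<ge> 2"
      thus "probC_given_A2 n (r n) \<le> 4 * (real (r n) / sqrt (real n))^2"
        using probC_bound[of "r n" n] eps_le[of n "r n"] assms(1) by fastforce
    qed
  qed
qed

end
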